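(* In the tracking setting, fix $k\geq0$ and assume (i) $\|s_{k+1}-s_k\|_2<\min\big\{r_A,\ r_B,\ \frac{q_B\rho}{\lambda_A\lambda_F}\big\}$; (ii) $\|\bar w_k-w^\ast_k\|_2<q_B\rho$; (iii) $\big(1+\frac{\lambda_H\lambda_B}{\rho}\big)\|\bar w_k-w^\ast_k\|_2+\lambda_H\lambda_B\|s_{k+1}-s_k\|_2<\delta$. Then $$\|\bar w_{k+1}-w^\ast_{k+1}\|_2\leq\beta_w(\rho,M)\|\bar w_k-w^\ast_k\|_2+\beta_s(\rho,M)\|s_{k+1}-s_k\|_2,$$ where $$\beta_w(\rho,M):=C(1+\rho\lambda_G)\Big(1+\frac{\lambda_B\lambda_H}{\rho}\Big)M^{-\psi}+\frac{\lambda_B\lambda_H}{\rho},\qquad \beta_s(\rho,M):=C(1+\rho\lambda_G)\lambda_B\lambda_HM^{-\psi}+\frac{\lambda_B\lambda_H\lambda_A\lambda_F}{\rho}.$$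
   Context: Problem data: $z=(z_1,\dots,z_P)\in\mathbb{R}^{n_z}$; $\mathcal{Z}=\mathcal{Z}_1\times\cdots\times\mathcal{Z}_P$ a product of nonempty bounded boxes; $J(z)=\sum_iJ_i(z_i)$ with polynomials $J_i$; polynomial maps $Q_c:\mathbb{R}^{n_z}\to\mathbb{R}^m$, $g_i:\mathbb{R}^{n_i}\to\mathbb{R}^{q_i}$; $T_i\in\mathbb{R}^{q_i\times p}$; $q=\sum q_i$; $\mathcal{S}\subseteq\mathbb{R}^p$; $G(z,s)=(Q_c(z),g_1(z_1)+T_1s,\dots,g_P(z_P)+T_Ps)$; $L_\rho(z,\mu,s)=J(z)+(\mu+\frac\rho2G(z,s))^\top G(z,s)$; for $w=(z,\mu)$, $F(w,s)=(\nabla J(z)+\nabla_zG(z,s)^\top\mu,\ G(z,s))$; $\mathcal{N}:=\mathcal{N}_{\mathcal{Z}\times\mathbb{R}^{m+q}}$. A KKT point of $(P_s)$: $\min J(z)$ s.t. $G(z,s)=0$, $z\in\mathcal{Z}$, is $w$ with $0\in F(w,s)+\mathcal{N}(w)$. For a reference multiplier $\tilde\mu$: $H^{\tilde\mu}_\rho(w,d,s):=(\nabla J(z)+\nabla_zG(z,s)^\top\mu,\ G(z,s)+d+(\tilde\mu-\mu)/\rho)$. Constants: $\lambda_F:=P\max_i\|T_i\|_2$; $\lambda_H>0$ with $\|H^{\tilde\mu}_\rho(w,d,s)-H^{\tilde\mu}_\rho(w,d',s')\|\le\lambda_H\|(d,s)-(d',s')\|$ for all arguments; $\lambda_G>0$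 a Lipschitz constant of $z\mapsto G(z,s)$ on $\mathcal{Z}$ (independent of $s$). Primal sweep on $L_\rho(\cdot,\mu,s)$: block-coordinate projected-gradient pass over $i=1,\dots,P$ in order, each block update $z_i\leftarrow\pi_{\mathcal{Z}_i}(z_i-\frac1{c_i}\nabla_{z_i}L_\rho)$ (gradient evaluated with already updated preceding blocks) with curvature $c_i$ obtained by backtracking (multiply by $\beta>1$ from an initial $c_i^0>0$) until $f(u)+\frac{\alpha_i}2\|u-z_i\|^2\le f(z_i)+\nabla f(z_i)^\top(u-z_i)+\frac{c_i}2\|u-z_i\|^2$ for the block function $f$, with $\alpha_i>0$. Tracking setting: fix $\rho>0$, $M\ge1$. Given parameters $(s_k)_{k\ge0}\subset\mathcal{S}$ and KKT points $w^\ast_k=(z^\ast_k,\mu^\ast_k)$ of $(P_{s_k})$. Iterates $\bar w_k=(\bar z_k,\bar\mu_k)$ with $\bar z_k\in\mathcal{Z}$ are produced by: $\bar z_{k+1}$ = result of $M$ successive primal sweeps on $L_\rho(\cdot,\bar\mu_k,s_{k+1})$ started at $\bar z_k$; $\bar\mu_{k+1}=\bar\mu_k+\rho G(\bar z_{k+1},s_{k+1})$. Let $z^\infty_k$ be the limit of infinitely many sweeps on $L_\rho(\cdot,\bar\mu_k,s_{k+1})$ started at $\bar z_k$, and $w^\infty_k:=(z^\infty_k,\ \bar\mu_k+\rho G(z^\infty_k,s_{k+1}))$; $d_k:=(\bar\mu_k-\mu^\ast_k)/\rho$. Standing hypotheses, for every $k$: (A) there are constants $r_A,\delta_A,\lambda_A>0$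 (independent of $k$) such that for every $s\in\mathcal{B}(s_k,r_A)\cap\mathcal{S}$ there is a unique $w^\ast(s)\in\mathcal{B}(w^\ast_k,\delta_A)$ with $0\in F(w^\ast(s),s)+\mathcal{N}(w^\ast(s))$, for all $s,s'\in\mathcal{B}(s_k,r_A)\cap\mathcal{S}$ one has $\|w^\ast(s)-w^\ast(s')\|\le\lambda_A\|F(w^\ast(s'),s)-F(w^\ast(s'),s')\|$, and $w^\ast_{k+1}=w^\ast(s_{k+1})$ whenever $\|s_{k+1}-s_k\|<r_A$; (B) there are constants $r_B,q_B,\lambda_B>0$ and $\delta_B\ge\delta_A$ (independent of $k$) such that for all $d\in\mathcal{B}(0,q_B)$, $s\in\mathcal{B}(s_k,r_B)\cap\mathcal{S}$ there is a unique $w^\ast_k(d,s)\in\mathcal{B}(w^\ast_k,\delta_B)$ with $0\in H^{\mu^\ast_k}_\rho(w^\ast_k(d,s),d,s)+\mathcal{N}(w^\ast_k(d,s))$, and $\|w^\ast_k(d,s)-w^\ast_k(d',s')\|\le\lambda_B\|H^{\mu^\ast_k}_\rho(w^\ast_k(d',s'),d,s)-H^{\mu^\ast_k}_\rho(w^\ast_k(d',s'),d',s')\|$ for all such $d,d',s,s'$; (C) there are constants $C>0$, $\delta>0$, $\psi>0$ (independent of $k$) such that the sequence of sweeps defining $z^\infty_k$ converges, $w^\infty_k=w^\ast_k(d_k,s_{k+1})$ whenever $d_k\in\mathcal{B}(0,q_B)$ and $\|s_{k+1}-s_k\|<r_B$, and if $\|\bar z_k-z^\infty_k\|<\delta$ then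 $\|\bar z_{k+1}-z^\infty_k\|\le CM^{-\psi}\|\bar z_k-z^\infty_k\|$. (In the paper, $\psi=\psi(d_L,n_z)=1/(d_L(3d_L-3)^{n_z-1}-2)$ with $d_L$ the degree of the augmented Lagrangian.) *)

theory Defs
  imports "HOL-Analysis.Analysis"
begin

text \<open>Vectors: z :: real^'n (the n_z primal variables), multipliers mu :: (real^'m) \<times> (real^'q)
  (the m + q equality constraints; the first factor belongs to Q_c, the second to the stacked
  rows g_i(z_i) + T_i s), parameters s :: real^'p.  Blocks are encoded by an assignment
  blk :: 'n => nat of coordinates to blocks 0..P-1 and bq :: 'q => nat of constraint rows to blocks.\<close>

definition grad :: "(real^'n \<Rightarrow> real) \<Rightarrow> real^'n \<Rightarrow> real^'n" where
  "grad f z = (\<chi> j. frechet_derivative f (at z) (axis j 1))"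

definition jacT :: "(real^'n \<Rightarrow> 'b::real_inner) \<Rightarrow> real^'n \<Rightarrow> 'b \<Rightarrow> real^'n" where
  "jacT G z mu = (\<chi> j. inner mu (frechet_derivative G (at z) (axis j 1)))"

definition Gfun :: "(real^'n \<Rightarrow> real^'m) \<Rightarrow> (real^'n \<Rightarrow> real^'q) \<Rightarrow> real^'p^'q
    \<Rightarrow> real^'n \<Rightarrow> real^'p \<Rightarrow> (real^'m) \<times> (real^'q)" where
  "Gfun Qc g T z s = (Qc z, g z + T *v s)"

definition Ffun :: "(real^'n \<Rightarrow> real) \<Rightarrow> (real^'n \<Rightarrow> real^'m) \<Rightarrow> (real^'n \<Rightarrow> real^'q)
    \<Rightarrow> real^'p^'q \<Rightarrow> (real^'n) \<times> ((real^'m) \<times> (real^'q)) \<Rightarrow> real^'p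
    \<Rightarrow> (real^'n) \<times> ((real^'m) \<times> (real^'q))" where
  "Ffun J Qc g T w s =
     (grad J (fst w) + jacT (\<lambda>z. Gfun Qc g T z s) (fst w) (snd w), Gfun Qc g T (fst w) s)"

definition Hfun :: "(real^'n \<Rightarrow> real) \<Rightarrow> (real^'n \<Rightarrow> real^'m) \<Rightarrow> (real^'n \<Rightarrow> real^'q)
    \<Rightarrow> real^'p^'q \<Rightarrow> real \<Rightarrow> (real^'m) \<times> (real^'q) \<Rightarrow> (real^'n) \<times> ((real^'m) \<times> (real^'q))
    \<Rightarrow> (real^'m) \<times> (real^'q) \<Rightarrow> real^'p \<Rightarrow> (real^'n) \<times> ((real^'m) \<times> (real^'q))" where
  "Hfun J Qc g T rho mut w d s =
     (grad J (fst w) + jacT (\<lambda>z. Gfun Qc g T z s) (fst w) (snd w),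
      Gfun Qc g T (fst w) s + d + (1 / rho) *\<^sub>R (mut - snd w))"

definition Lagr :: "(real^'n \<Rightarrow> real) \<Rightarrow> (real^'n \<Rightarrow> real^'m) \<Rightarrow> (real^'n \<Rightarrow> real^'q)
    \<Rightarrow> real^'p^'q \<Rightarrow> real \<Rightarrow> real^'n \<Rightarrow> (real^'m) \<times> (real^'q) \<Rightarrow> real^'p \<Rightarrow> real" where
  "Lagr J Qc g T rho z mu s =
     J z + inner (mu + (rho / 2) *\<^sub>R Gfun Qc g T z s) (Gfun Qc g T z s)"

definition normal_cone :: "'a::real_inner set \<Rightarrow> 'a \<Rightarrow> 'a set" where
  "normal_cone X w = (if w \<in> X then {v. \<forall>y\<in>X. inner v (y - w) \<le> 0} else {})"

definition is_KKT where
  "is_KKT J Qc g T Z w s =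
     (0 \<in> {Ffun J Qc g T w s + v | v. v \<in> normal_cone (Z \<times> UNIV) w})"

definition is_HKKT where
  "is_HKKT J Qc g T Z rho mut w d s =
     (0 \<in> {Hfun J Qc g T rho mut w d s + v | v. v \<in> normal_cone (Z \<times> UNIV) w})"

text \<open>Block matrix T_i: the rows of T belonging to block i (other rows set to zero,
  which does not change the operator 2-norm).\<close>
definition blockmat :: "('q \<Rightarrow> nat) \<Rightarrow> real^'p^'q \<Rightarrow> nat \<Rightarrow> real^'p^'q" where
  "blockmat bq T i = (\<chi> r. if bq r = i then T $ r else 0)"

definition blockset :: "('n \<Rightarrow> nat) \<Rightarrow> real^'n \<Rightarrow> real^'n \<Rightarrow> nat \<Rightarrow> real^'n \<Rightarrow> (real^'n) set" where
  "blockset blk lo hi i z =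
     {u. (\<forall>j. blk j = i \<longrightarrow> lo $ j \<le> u $ j \<and> u $ j \<le> hi $ j) \<and> (\<forall>j. blk j \<noteq> i \<longrightarrow> u $ j = z $ j)}"

definition block_grad :: "('n \<Rightarrow> nat) \<Rightarrow> (real^'n \<Rightarrow> real) \<Rightarrow> nat \<Rightarrow> real^'n \<Rightarrow> real^'n" where
  "block_grad blk f i z = (\<chi> j. if blk j = i then grad f z $ j else 0)"

definition block_trial where
  "block_trial blk lo hi f i z c =
     closest_point (blockset blk lo hi i z) (z - (1 / c) *\<^sub>R block_grad blk f i z)"

definition bt_ok where
  "bt_ok alpha blk lo hi f i z c =
     (let u = block_trial blk lo hi f i z c in
        f u + alpha i / 2 * (norm (u - z))\<^sup>2
          \<le> f z + inner (block_grad blk f i z) (u - z) + c / 2 * (norm (u - z))\<^sup>2)"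

definition block_curv where
  "block_curv alpha c0 beta blk lo hi f i z =
     c0 i * beta ^ (LEAST j. bt_ok alpha blk lo hi f i z (c0 i * beta ^ j))"

definition block_update where
  "block_update alpha c0 beta blk lo hi f i z =
     block_trial blk lo hi f i z (block_curv alpha c0 beta blk lo hi f i z)"

definition sweep where
  "sweep P alpha c0 beta blk lo hi f z =
     foldl (\<lambda>x i. block_update alpha c0 beta blk lo hi f i x) z [0..<P]"

end

theory Submission
  imports Defs
begin


lemma norm_snd': "norm (snd x) \<le> norm x" by (metis norm_snd_le prod.collapse)
lemma norm_fst': "norm (fst x) \<le> norm x" by (metis norm_fst_le prod.collapse)

lemma blockset_closed: "closed (blockset blk lo hi i z)"
  unfolding blockset_def
  apply (intro closed_Collect_all closed_Collect_conj closed_Collect_imp closed_Collect_le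
      closed_Collect_eq open_Collect_neg closed_Collect_const continuous_intros)
  subgoal for j by (cases "blk j = i") auto
  done

lemma blockset_mem: "z \<in> cbox lo hi \<Longrightarrow> z \<in> blockset blk lo hi i z"
  unfolding blockset_def by (auto simp: mem_box_cart)

lemma blockset_sub: "z \<in> cbox lo hi \<Longrightarrow> blockset blk lo hi i z \<subseteq> cbox lo hi"
  unfolding blockset_def by (auto simp: mem_box_cart) (metis)+

lemma block_update_in: "z \<in> cbox lo hi \<Longrightarrow> block_update alpha c0 beta blk lo hi f i z \<in> cbox lo hi"
  unfolding block_update_def block_trial_def
  using closest_point_in_set[OF blockset_closed] blockset_mem blockset_sub by blast

lemma foldl_in: "(\<And>x i. x \<in> A \<Longrightarrow> h x i \<in> A) \<Longrightarrow> z \<in> A \<Longrightarrow> foldl h z xs \<in> A"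
  by (induction xs arbitrary: z) auto

lemma sweep_in: "z \<in> cbox lo hi \<Longrightarrow> sweep P alpha c0 beta blk lo hi f z \<in> cbox lo hi"
  unfolding sweep_def by (rule foldl_in[where A="cbox lo hi"]) (auto intro: block_update_in)

lemma sweep_pow_in: "z \<in> cbox lo hi \<Longrightarrow> (sweep P alpha c0 beta blk lo hi f ^^ n) z \<in> cbox lo hi"
  by (induction n) (auto intro: sweep_in)

lemma Gfun_deriv:
  assumes "polynomial_function Qc" "polynomial_function g"
  shows "((\<lambda>z. Gfun Qc g T z s) has_derivative
     (\<lambda>h. (frechet_derivative Qc (at z) h, frechet_derivative g (at z) h))) (at z)"
proof -
  have q: "(Qc has_derivative frechet_derivative Qc (at z)) (at z)"
    using differentiable_at_polynomial_function[OF assms(1)] frechet_derivative_works by blast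
  have gg: "(g has_derivative frechet_derivative g (at z)) (at z)"
    using differentiable_at_polynomial_function[OF assms(2)] frechet_derivative_works by blast
  show ?thesis unfolding Gfun_def
    by (intro has_derivative_Pair q has_derivative_add_const gg)
qed

lemma jacT_indep:
  assumes "polynomial_function Qc" "polynomial_function g"
  shows "jacT (\<lambda>z. Gfun Qc g T z s) z mu = jacT (\<lambda>z. Gfun Qc g T z s') z mu"
  unfolding jacT_def
  using frechet_derivative_at[OF Gfun_deriv[OF assms, of T s z]]
        frechet_derivative_at[OF Gfun_deriv[OF assms, of T s' z]] by simp

lemma Ffun_diff:
  assumes "polynomial_function Qc" "polynomial_function g"
  shows "Ffun J Qc g T w s' - Ffun J Qc g T w s = (0, (0, T *v s' - T *v s))"
  unfolding Ffun_def using jacT_indep[OF assms, of T s' "fst w" "snd w" s]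
  by (simp add: Gfun_def)

lemma Hfun_Ffun:
  "Hfun J Qc g T rho mut w d s = Ffun J Qc g T w s + (0, d + (1/rho) *\<^sub>R (mut - snd w))"
  unfolding Hfun_def Ffun_def by (simp add: algebra_simps)

lemma T_split:
  assumes "\<forall>r. bq r < P"
  shows "T *v x = (\<Sum>i<P. blockmat bq T i *v x)"
proof (rule vec_eq_iff[THEN iffD2], rule allI)
  fix r
  have "(\<Sum>i<P. blockmat bq T i *v x) $ r = (\<Sum>i<P. (blockmat bq T i *v x) $ r)"
    by (simp add: sum_component)
  also have "\<dots> = (\<Sum>i<P. if bq r = i then (T *v x) $ r else 0)"
    by (rule sum.cong) (auto simp: blockmat_def matrix_vector_mult_def)
  also have "\<dots> = (T *v x) $ r" using assms by (simp add: sum.delta)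
  finally show "(T *v x) $ r = (\<Sum>i<P. blockmat bq T i *v x) $ r" by simp
qed

lemma T_bound:
  assumes "\<forall>r. bq r < P"
  shows "norm (T *v x) \<le> real P * Max ((\<lambda>i. onorm (\<lambda>x. blockmat bq T i *v x)) ` {..<P}) * norm x"
proof -
  let ?m = "Max ((\<lambda>i. onorm (\<lambda>x. blockmat bq T i *v x)) ` {..<P})"
  have "norm (T *v x) \<le> (\<Sum>i<P. norm (blockmat bq T i *v x))"
    using T_split[OF assms, of T x] norm_sum by metis
  also have "\<dots> \<le> (\<Sum>i<P. ?m * norm x)"
  proof (rule sum_mono)
    fix i assume i: "i \<in> {..<P}"
    have "norm (blockmat bq T i *v x) \<le> onorm (\<lambda>x. blockmat bq T i *v x) * norm x"
      by (rule onorm) (rule matrix_vector_mul_bounded_linear)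
    also have "\<dots> \<le> ?m * norm x"
      by (rule mult_right_mono) (use i in auto)
    finally show "norm (blockmat bq T i *v x) \<le> ?m * norm x" .
  qed
  also have "\<dots> = real P * ?m * norm x" by simp
  finally show ?thesis .
qed

theorem mainTheorem10:
  fixes Jb :: "nat \<Rightarrow> real^'n \<Rightarrow> real"
    and Qc :: "real^'n \<Rightarrow> real^'m"
    and g :: "real^'n \<Rightarrow> real^'q"
    and T :: "real^'p^'q"
    and blk :: "'n \<Rightarrow> nat" and bq :: "'q \<Rightarrow> nat" and P :: nat
    and lo hi :: "real^'n"
    and S :: "(real^'p) set"
    and alpha c0 :: "nat \<Rightarrow> real" and beta :: real
    and rho :: real and M :: nat
    and s :: "nat \<Rightarrow> real^'p"
    and wstar :: "nat \<Rightarrow> (real^'n) \<times> ((real^'m) \<times> (real^'q))"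
    and zbar :: "nat \<Rightarrow> real^'n" and mubar :: "nat \<Rightarrow> (real^'m) \<times> (real^'q)"
    and rA dA lamA rB qB lamB dB C del psi lamH lamG :: real
    and k :: nat
  defines "J \<equiv> (\<lambda>z. \<Sum>i<P. Jb i z)"
    and "Z \<equiv> cbox lo hi"
    and "G \<equiv> Gfun Qc g T"
    and "F \<equiv> Ffun (\<lambda>z. \<Sum>i<P. Jb i z) Qc g T"
    and "KKT \<equiv> is_KKT (\<lambda>z. \<Sum>i<P. Jb i z) Qc g T (cbox lo hi)"
    and "HKKT \<equiv> is_HKKT (\<lambda>z. \<Sum>i<P. Jb i z) Qc g T (cbox lo hi) rho"
    and "Lk \<equiv> (\<lambda>k z. Lagr (\<lambda>z. \<Sum>i<P. Jb i z) Qc g T rho z (mubar k) (s (Suc k)))"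
    and "sw \<equiv> sweep P alpha c0 beta blk lo hi"
    and "wbar \<equiv> (\<lambda>k. (zbar k, mubar k))"
    and "mustar \<equiv> (\<lambda>k. snd (wstar k))"
    and "zinf \<equiv> (\<lambda>k. lim (\<lambda>n. (sweep P alpha c0 beta blk lo hi
                 (\<lambda>z. Lagr (\<lambda>z. \<Sum>i<P. Jb i z) Qc g T rho z (mubar k) (s (Suc k))) ^^ n) (zbar k)))"
    and "winf \<equiv> (\<lambda>k. (lim (\<lambda>n. (sweep P alpha c0 beta blk lo hi
                 (\<lambda>z. Lagr (\<lambda>z. \<Sum>i<P. Jb i z) Qc g T rho z (mubar k) (s (Suc k))) ^^ n) (zbar k)),
            mubar k + rho *\<^sub>R Gfun Qc g T (lim (\<lambda>n. (sweep P alpha c0 beta blk lo hi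
                 (\<lambda>z. Lagr (\<lambda>z. \<Sum>i<P. Jb i z) Qc g T rho z (mubar k) (s (Suc k))) ^^ n) (zbar k))) (s (Suc k))))"
    and "dk \<equiv> (\<lambda>k. (1 / rho) *\<^sub>R (mubar k - snd (wstar k)))"
    and "lamF \<equiv> real P * Max ((\<lambda>i. onorm (\<lambda>x. blockmat bq T i *v x)) ` {..<P})"
  assumes blocks: "\<forall>j. blk j < P" "\<forall>i<P. \<exists>j. blk j = i" "\<forall>r. bq r < P"
    and box: "\<forall>j. lo $ j \<le> hi $ j"
    and polyJ: "\<forall>i<P. polynomial_function (Jb i)"
    and sepJ: "\<forall>i<P. \<forall>z z'. (\<forall>j. blk j = i \<longrightarrow> z $ j = z' $ j) \<longrightarrow> Jb i z = Jb i z'"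
    and polyQ: "polynomial_function Qc"
    and polyg: "polynomial_function g"
    and sepg: "\<forall>r z z'. (\<forall>j. blk j = bq r \<longrightarrow> z $ j = z' $ j) \<longrightarrow> g z $ r = g z' $ r"
    and sweep_par: "beta > 1" "\<forall>i<P. c0 i > 0" "\<forall>i<P. alpha i > 0"
    and rho_pos: "rho > 0" and M_ge: "M \<ge> 1"
    and s_in: "\<forall>k. s k \<in> S"
    and wstar_KKT: "\<forall>k. KKT (wstar k) (s k)"
    and zbar_in: "\<forall>k. zbar k \<in> Z"
    and zbar_rec: "\<forall>k. zbar (Suc k) = (sw (Lk k) ^^ M) (zbar k)"
    and mubar_rec: "\<forall>k. mubar (Suc k) = mubar k + rho *\<^sub>R G (zbar (Suc k)) (s (Suc k))"
    and lamH: "lamH > 0"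
      "\<forall>mut w d d' \<sigma> \<sigma>'. norm (Hfun J Qc g T rho mut w d \<sigma> - Hfun J Qc g T rho mut w d' \<sigma>')
          \<le> lamH * norm ((d, \<sigma>) - (d', \<sigma>'))"
    and lamG: "lamG > 0" "\<forall>\<sigma>. \<forall>z\<in>Z. \<forall>z'\<in>Z. norm (G z \<sigma> - G z' \<sigma>) \<le> lamG * norm (z - z')"
    and hypA: "rA > 0" "dA > 0" "lamA > 0"
      "\<forall>k. \<exists>wA.
         (\<forall>\<sigma>\<in>ball (s k) rA \<inter> S. wA \<sigma> \<in> ball (wstar k) dA \<and> KKT (wA \<sigma>) \<sigma> \<and>
             (\<forall>w\<in>ball (wstar k) dA. KKT w \<sigma> \<longrightarrow> w = wA \<sigma>)) \<and>
         (\<forall>\<sigma>\<in>ball (s k) rA \<inter> S. \<forall>\<sigma>'\<in>ball (s k) rA \<inter> S.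
             norm (wA \<sigma> - wA \<sigma>') \<le> lamA * norm (F (wA \<sigma>') \<sigma> - F (wA \<sigma>') \<sigma>')) \<and>
         (norm (s (Suc k) - s k) < rA \<longrightarrow> wstar (Suc k) = wA (s (Suc k)))"
    and hypB: "rB > 0" "qB > 0" "lamB > 0" "dB \<ge> dA"
    and hypC: "C > 0" "del > 0" "psi > 0"
    and hypBC: "\<forall>k. \<exists>wB.
         (\<forall>d\<in>ball 0 qB. \<forall>\<sigma>\<in>ball (s k) rB \<inter> S.
             wB d \<sigma> \<in> ball (wstar k) dB \<and> HKKT (mustar k) (wB d \<sigma>) d \<sigma> \<and>
             (\<forall>w\<in>ball (wstar k) dB. HKKT (mustar k) w d \<sigma> \<longrightarrow> w = wB d \<sigma>)) \<and>
         (\<forall>d\<in>ball 0 qB. \<forall>\<sigma>\<in>ball (s k) rB \<inter> S. \<forall>d'\<in>ball 0 qB. \<forall>\<sigma>'\<in>ball (s k) rB \<inter> S.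
             norm (wB d \<sigma> - wB d' \<sigma>')
               \<le> lamB * norm (Hfun J Qc g T rho (mustar k) (wB d' \<sigma>') d \<sigma>
                              - Hfun J Qc g T rho (mustar k) (wB d' \<sigma>') d' \<sigma>')) \<and>
         (dk k \<in> ball 0 qB \<and> norm (s (Suc k) - s k) < rB \<longrightarrow> winf k = wB (dk k) (s (Suc k)))"
    and hypC_conv: "\<forall>k. convergent (\<lambda>n. (sw (Lk k) ^^ n) (zbar k))"
    and hypC_rate: "\<forall>k. norm (zbar k - zinf k) < del \<longrightarrow>
         norm (zbar (Suc k) - zinf k) \<le> C * real M powr (- psi) * norm (zbar k - zinf k)"
    and i: "norm (s (Suc k) - s k) < min rA (min rB (qB * rho / (lamA * lamF)))"
    and ii: "norm (wbar k - wstar k) < qB * rho"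
    and iii: "(1 + lamH * lamB / rho) * norm (wbar k - wstar k) + lamH * lamB * norm (s (Suc k) - s k) < del"
  shows "norm (wbar (Suc k) - wstar (Suc k))
           \<le> (C * (1 + rho * lamG) * (1 + lamB * lamH / rho) * real M powr (- psi) + lamB * lamH / rho)
               * norm (wbar k - wstar k)
             + (C * (1 + rho * lamG) * lamB * lamH * real M powr (- psi) + lamB * lamH * lamA * lamF / rho)
               * norm (s (Suc k) - s k)"
  proof -
  let ?e = "norm (wbar k - wstar k)"
  let ?ds = "norm (s (Suc k) - s k)"
  let ?s0 = "s k" and ?s1 = "s (Suc k)"
  have dAp: "dA > 0" and dBp: "dB > 0" using hypA hypB by auto
  have Ppos: "P > 0" using blocks(1) by (metis gr_zeroI less_nat_zero_code)
  have lamF_nn: "lamF \<ge> 0" unfolding lamF_def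
    using Ppos by (auto intro!: mult_nonneg_nonneg Max_ge_iff[THEN iffD2] onorm_pos_le
          matrix_vector_mul_bounded_linear simp: lessThan_empty_iff)
  have Tb: "\<And>x. norm (T *v x) \<le> lamF * norm x" unfolding lamF_def by (rule T_bound[OF blocks(3)])
  have Fd: "\<And>w. norm (F w ?s1 - F w ?s0) \<le> lamF * ?ds"
  proof -
    fix w
    have "F w ?s1 - F w ?s0 = (0, (0, T *v (?s1 - ?s0)))"
      unfolding F_def using Ffun_diff[OF polyQ polyg] by (simp add: matrix_vector_mult_diff_distrib)
    then show "norm (F w ?s1 - F w ?s0) \<le> lamF * ?ds" using Tb by (simp add: norm_Pair1)
  qed
  have ds_rA: "?ds < rA" and ds_rB: "?ds < rB" and ds_q: "?ds < qB * rho / (lamA * lamF)"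
    using i by auto
  have s0in: "?s0 \<in> ball ?s0 rA \<inter> S" "?s0 \<in> ball ?s0 rB \<inter> S" using s_in hypA hypB by auto
  have s1in: "?s1 \<in> ball ?s0 rA \<inter> S" "?s1 \<in> ball ?s0 rB \<inter> S" using s_in ds_rA ds_rB
    by (auto simp: dist_norm norm_minus_commute)
  obtain wA where A1: "\<forall>\<sigma>\<in>ball (s k) rA \<inter> S. wA \<sigma> \<in> ball (wstar k) dA \<and> KKT (wA \<sigma>) \<sigma> \<and>
             (\<forall>w\<in>ball (wstar k) dA. KKT w \<sigma> \<longrightarrow> w = wA \<sigma>)"
    and A2: "\<forall>\<sigma>\<in>ball (s k) rA \<inter> S. \<forall>\<sigma>'\<in>ball (s k) rA \<inter> S.
             norm (wA \<sigma> - wA \<sigma>') \<le> lamA * norm (F (wA \<sigma>') \<sigma> - F (wA \<sigma>') \<sigma>')"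
    and A3: "norm (s (Suc k) - s k) < rA \<longrightarrow> wstar (Suc k) = wA (s (Suc k))"
    using hypA(4) by blast
  have wA0: "wA ?s0 = wstar k" using A1 s0in(1) wstar_KKT dAp by force
  have wA1: "wA ?s1 = wstar (Suc k)" using A3 ds_rA by simp
  have ws1ball: "wstar (Suc k) \<in> ball (wstar k) dB"
  proof -
    have "wA ?s1 \<in> ball (wstar k) dA" using A1 s1in(1) by blast
    then show ?thesis using wA1 hypB(4) by auto
  qed
  have wsdiff: "norm (wstar (Suc k) - wstar k) \<le> lamA * (lamF * ?ds)"
  proof -
    have "norm (wstar (Suc k) - wstar k) \<le> lamA * norm (F (wstar k) ?s1 - F (wstar k) ?s0)"
      using A2 s0in(1) s1in(1) wA0 wA1 by metis
    also have "\<dots> \<le> lamA * (lamF * ?ds)" using Fd hypA(3) by (simp add: mult_left_mono)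
    finally show ?thesis .
  qed
  obtain wB where B1: "\<forall>d\<in>ball 0 qB. \<forall>\<sigma>\<in>ball (s k) rB \<inter> S.
             wB d \<sigma> \<in> ball (wstar k) dB \<and> HKKT (mustar k) (wB d \<sigma>) d \<sigma> \<and>
             (\<forall>w\<in>ball (wstar k) dB. HKKT (mustar k) w d \<sigma> \<longrightarrow> w = wB d \<sigma>)"
    and B2: "\<forall>d\<in>ball 0 qB. \<forall>\<sigma>\<in>ball (s k) rB \<inter> S. \<forall>d'\<in>ball 0 qB. \<forall>\<sigma>'\<in>ball (s k) rB \<inter> S.
             norm (wB d \<sigma> - wB d' \<sigma>')
               \<le> lamB * norm (Hfun J Qc g T rho (mustar k) (wB d' \<sigma>') d \<sigma>
                              - Hfun J Qc g T rho (mustar k) (wB d' \<sigma>') d' \<sigma>')"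
    and B3: "dk k \<in> ball 0 qB \<and> norm (s (Suc k) - s k) < rB \<longrightarrow> winf k = wB (dk k) (s (Suc k))"
    using hypBC by blast
  have HK: "\<And>mut w d \<sigma>. d + (1/rho) *\<^sub>R (mut - snd w) = 0 \<Longrightarrow> HKKT mut w d \<sigma> = KKT w \<sigma>"
    unfolding HKKT_def KKT_def is_HKKT_def is_KKT_def Hfun_Ffun by (simp flip: zero_prod_def)
  have z0: "0 \<in> ball (0::(real^'m) \<times> (real^'q)) qB" using hypB by simp
  have wB0: "wB 0 ?s0 = wstar k"
  proof -
    have "HKKT (mustar k) (wstar k) 0 ?s0" using HK[of 0 "mustar k" "wstar k" ?s0] wstar_KKT
      unfolding mustar_def by simp
    then show ?thesis using B1 z0 s0in(2) dBp by force
  qed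
  define d' where "d' = (1/rho) *\<^sub>R (mustar (Suc k) - mustar k)"
  have d'norm: "norm d' \<le> lamA * lamF * ?ds / rho"
  proof -
    have "norm d' = norm (mustar (Suc k) - mustar k) / rho" unfolding d'_def using rho_pos by simp
    also have "\<dots> \<le> norm (wstar (Suc k) - wstar k) / rho" unfolding mustar_def
      using norm_snd'[of "wstar (Suc k) - wstar k"] rho_pos
      by (intro divide_right_mono) auto
    also have "\<dots> \<le> lamA * lamF * ?ds / rho" using wsdiff rho_pos
      by (intro divide_right_mono) auto
    finally show ?thesis .
  qed
  have d'ball: "d' \<in> ball 0 qB"
  proof (cases "lamA * lamF = 0")
    case True
    then have "norm d' \<le> 0" using d'norm by (simp only:)
    then show ?thesis using hypB by simp
  next
    case False
    then have pos: "lamA * lamF > 0" using hypA(3) lamF_nn by simp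
    have "?ds * (lamA * lamF) < qB * rho" using ds_q pos by (simp add: pos_less_divide_eq)
    then have "lamA * lamF * ?ds < qB * rho" by (simp add: mult.commute)
    then have "lamA * lamF * ?ds / rho < qB" using rho_pos by (simp add: divide_less_eq)
    then show ?thesis using d'norm by simp
  qed
  have wBd': "wB d' ?s1 = wstar (Suc k)"
  proof -
    have "HKKT (mustar k) (wstar (Suc k)) d' ?s1"
      using HK[of d' "mustar k" "wstar (Suc k)" ?s1] wstar_KKT unfolding d'_def mustar_def
      by (simp add: algebra_simps)
    then show ?thesis using B1 d'ball s1in(2) ws1ball by force
  qed
  have dknorm: "norm (dk k) \<le> ?e / rho"
  proof -
    have "norm (dk k) = norm (mubar k - snd (wstar k)) / rho" unfolding dk_def using rho_pos by simp
    also have "\<dots> \<le> ?e / rho" unfolding wbar_def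
      using norm_snd'[of "(zbar k, mubar k) - wstar k"] rho_pos
      by (intro divide_right_mono) auto
    finally show ?thesis .
  qed
  have dkball: "dk k \<in> ball 0 qB" using dknorm ii rho_pos
    by (simp add: pos_divide_le_eq) (smt (verit, best) divide_strict_right_mono nonzero_mult_div_cancel_right)
  have winfB: "winf k = wB (dk k) ?s1" using B3 dkball ds_rB by simp
  have Hl: "\<And>mut w (d::(real^'m)\<times>(real^'q)) d2 (\<sigma>::real^'p) \<sigma>'. norm (Hfun J Qc g T rho mut w d \<sigma> - Hfun J Qc g T rho mut w d2 \<sigma>')
          \<le> lamH * (norm (d - d2) + norm (\<sigma> - \<sigma>'))"
  proof -
    fix mut w and d d2 :: "(real^'m)\<times>(real^'q)" and \<sigma> \<sigma>' :: "real^'p"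
    have "norm ((d, \<sigma>) - (d2, \<sigma>')) \<le> norm (d - d2) + norm (\<sigma> - \<sigma>')"
      using norm_Pair_le by simp
    then show "norm (Hfun J Qc g T rho mut w d \<sigma> - Hfun J Qc g T rho mut w d2 \<sigma>')
          \<le> lamH * (norm (d - d2) + norm (\<sigma> - \<sigma>'))"
      using lamH by (meson mult_left_mono order_trans less_imp_le)
  qed
  have C1: "norm (winf k - wstar k) \<le> lamB * lamH * (?e / rho + ?ds)"
  proof -
    have "norm (winf k - wstar k) \<le> lamB * norm (Hfun J Qc g T rho (mustar k) (wB 0 ?s0) (dk k) ?s1
                              - Hfun J Qc g T rho (mustar k) (wB 0 ?s0) 0 ?s0)"
      using B2 dkball z0 s0in(2) s1in(2) winfB wB0 by metis
    also have "\<dots> \<le> lamB * (lamH * (norm (dk k - 0) + norm (?s1 - ?s0)))"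
      by (rule mult_left_mono[OF Hl[of "mustar k" "wB 0 ?s0" "dk k" ?s1 0 ?s0] less_imp_le[OF hypB(3)]])
    also have "\<dots> \<le> lamB * (lamH * (?e / rho + ?ds))"
      using dknorm hypB(3) lamH(1) by (simp add: mult_left_mono)
    finally show ?thesis by simp
  qed
  have D1: "norm (winf k - wstar (Suc k)) \<le> lamB * lamH * (?e / rho + lamA * lamF * ?ds / rho)"
  proof -
    have "norm (winf k - wstar (Suc k)) \<le> lamB * norm (Hfun J Qc g T rho (mustar k) (wB d' ?s1) (dk k) ?s1
                              - Hfun J Qc g T rho (mustar k) (wB d' ?s1) d' ?s1)"
      using B2 dkball d'ball s1in(2) winfB wBd' by metis
    also have "\<dots> \<le> lamB * (lamH * (norm (dk k - d') + norm (?s1 - ?s1)))"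
      by (rule mult_left_mono[OF Hl[of "mustar k" "wB d' ?s1" "dk k" ?s1 d' ?s1] less_imp_le[OF hypB(3)]])
    also have "\<dots> \<le> lamB * (lamH * (?e / rho + lamA * lamF * ?ds / rho))"
    proof -
      have "norm (dk k - d') \<le> norm (dk k) + norm d'" by (rule norm_triangle_ineq4)
      also have "\<dots> \<le> ?e / rho + lamA * lamF * ?ds / rho" using dknorm d'norm by simp
      finally show ?thesis using hypB(3) lamH(1) by (simp add: mult_left_mono)
    qed
    finally show ?thesis by simp
  qed
  have zinf_fst: "zinf k = fst (winf k)" unfolding zinf_def winf_def by simp
  have E1: "norm (zbar k - zinf k) \<le> (1 + lamH * lamB / rho) * ?e + lamH * lamB * ?ds"
  proof -
    have "norm (zbar k - zinf k) \<le> norm (wbar k - winf k)" unfolding zinf_fst wbar_def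
      using norm_fst'[of "(zbar k, mubar k) - winf k"] by simp
    also have "\<dots> \<le> ?e + norm (winf k - wstar k)"
      using norm_triangle_ineq4[of "wbar k - wstar k" "winf k - wstar k"] by simp
    also have "\<dots> \<le> ?e + lamB * lamH * (?e / rho + ?ds)" using C1 by simp
    also have "\<dots> = (1 + lamH * lamB / rho) * ?e + lamH * lamB * ?ds" by (simp add: algebra_simps)
    finally show ?thesis .
  qed
  have E2: "norm (zbar k - zinf k) < del" using E1 iii by simp
  have F1: "norm (zbar (Suc k) - zinf k) \<le> C * real M powr (- psi) * norm (zbar k - zinf k)"
    using hypC_rate E2 by blast
  have zinfZ: "zinf k \<in> Z"
  proof -
    have conv: "convergent (\<lambda>n. (sweep P alpha c0 beta blk lo hi
                 (\<lambda>z. Lagr (\<lambda>z. \<Sum>i<P. Jb i z) Qc g T rho z (mubar k) (s (Suc k))) ^^ n) (zbar k))"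
      using hypC_conv unfolding sw_def Lk_def by blast
    show ?thesis unfolding zinf_def Z_def
      using closed_sequentially[OF closed_cbox _ conv[unfolded convergent_LIMSEQ_iff]]
        sweep_pow_in zbar_in unfolding Z_def by blast
  qed
  have G1: "norm (wbar (Suc k) - winf k) \<le> (1 + rho * lamG) * norm (zbar (Suc k) - zinf k)"
  proof -
    have eq: "wbar (Suc k) - winf k = (zbar (Suc k) - zinf k,
               rho *\<^sub>R (G (zbar (Suc k)) ?s1 - G (zinf k) ?s1))"
      unfolding wbar_def winf_def zinf_def using mubar_rec unfolding G_def
      by (simp add: algebra_simps)
    have "norm (rho *\<^sub>R (G (zbar (Suc k)) ?s1 - G (zinf k) ?s1)) \<le> rho * (lamG * norm (zbar (Suc k) - zinf k))"
      using lamG(2) zinfZ zbar_in rho_pos by (simp add: mult_left_mono)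
    then have "norm (wbar (Suc k) - winf k) \<le> norm (zbar (Suc k) - zinf k) + rho * (lamG * norm (zbar (Suc k) - zinf k))"
      unfolding eq using norm_Pair_le[of "zbar (Suc k) - zinf k" "rho *\<^sub>R (G (zbar (Suc k)) ?s1 - G (zinf k) ?s1)"]
      by linarith
    then show ?thesis by (simp add: algebra_simps)
  qed
  have nnM: "C * real M powr (- psi) \<ge> 0" using hypC by simp
  have "norm (wbar (Suc k) - wstar (Suc k)) \<le> norm (wbar (Suc k) - winf k) + norm (winf k - wstar (Suc k))"
    using norm_triangle_ineq[of "wbar (Suc k) - winf k" "winf k - wstar (Suc k)"] by simp
  also have "\<dots> \<le> (1 + rho * lamG) * (C * real M powr (- psi) * ((1 + lamH * lamB / rho) * ?e + lamH * lamB * ?ds))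
       + lamB * lamH * (?e / rho + lamA * lamF * ?ds / rho)"
  proof -
    have "C * real M powr (- psi) * norm (zbar k - zinf k) \<le> C * real M powr (- psi) * ((1 + lamH * lamB / rho) * ?e + lamH * lamB * ?ds)"
      using E1 nnM by (rule mult_left_mono)
    then have "norm (zbar (Suc k) - zinf k) \<le> C * real M powr (- psi) * ((1 + lamH * lamB / rho) * ?e + lamH * lamB * ?ds)"
      using F1 by linarith
    then have "(1 + rho * lamG) * norm (zbar (Suc k) - zinf k) \<le> (1 + rho * lamG) * (C * real M powr (- psi) * ((1 + lamH * lamB / rho) * ?e + lamH * lamB * ?ds))"
      using rho_pos lamG(1) by (intro mult_left_mono) auto
    then show ?thesis using G1 D1 by linarith
  qed
  also have "\<dots> = (C * (1 + rho * lamG) * (1 + lamB * lamH / rho) * real M powr (- psi) + lamB * lamH / rho) * ?e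
             + (C * (1 + rho * lamG) * lamB * lamH * real M powr (- psi) + lamB * lamH * lamA * lamF / rho) * ?ds"
    by (simp add: algebra_simps add_divide_distrib)
  finally show ?thesis .
qed

end
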